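(* In the setting of the context, if $a,b\in C$ are distinct and $g\in G_a$ is non-trivial, then $$d_a(b,gb)\ge 2^{\frac{R-2}{\delta}}-4-6\delta.$$
   Context: $X$ is a $\delta$-hyperbolic geodesic metric space ($\delta>0$, every geodesic triangle $\delta$-thin). $G$ acts on $X$ by isometries and $\mathcal{C}=(C,\{G_c\})$ is a $\rho$-separated fairly rotating family with $\rho\ge20\delta$ (i.e. $C\subseteq X$ is $G$-invariant, $G_c$ fixes $c$, $G_{gc}=gG_cg^{-1}$, distinct points of $C$ are at distance $\ge\rho$, and for $c\in C$, $g\in G_c\setminus\{1\}$, $x\in C\setminus\{c\}$ some geodesic from $x$ to $gx$ meets the closed $1$-ball about $c$). Fix $2+2\delta\le R\le\frac\rho2-3\delta$; $B_r(p)$ denotes the open ball. For $p\in C$, $S_p=\{x:d(x,p)=R\}$ with metric $d_{S_p}(x,y)=$ infimum of lengths of paths from $x$ to $y$ in $X\setminus B_R(p)$ (possibly $\infty$). For $x\in C\setminus\{p\}$, $\pi_p(x)\subseteq S_p$ is the set of points where geodesics $[p,x]$ meet $S_p$, and $d_p(x,y)=\operatorname{diam}_{S_p}(\pi_p(x)\cup\pi_p(y))$. *)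

theory Defs
  imports "HOL-Analysis.Analysis" "HOL-Algebra.Group"
begin

text \<open>The metric space X is the whole of the type 'a.\<close>

definition geodesic :: "(real \<Rightarrow> 'a::metric_space) \<Rightarrow> 'a \<Rightarrow> 'a \<Rightarrow> bool" where
  "geodesic \<gamma> x y \<longleftrightarrow> \<gamma> 0 = x \<and> \<gamma> (dist x y) = y \<and>
     (\<forall>s\<in>{0..dist x y}. \<forall>t\<in>{0..dist x y}. dist (\<gamma> s) (\<gamma> t) = \<bar>s - t\<bar>)"

definition geodesic_space :: "'a::metric_space itself \<Rightarrow> bool" where
  "geodesic_space _ \<longleftrightarrow> (\<forall>x y::'a. \<exists>\<gamma>. geodesic \<gamma> x y)"

definition gromov_product :: "'a::metric_space \<Rightarrow> 'a \<Rightarrow> 'a \<Rightarrow> real" where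
  "gromov_product x y z = (dist x y + dist x z - dist y z) / 2"

definition delta_hyperbolic :: "'a::metric_space itself \<Rightarrow> real \<Rightarrow> bool" where
  "delta_hyperbolic T \<delta> \<longleftrightarrow> geodesic_space T \<and>
     (\<forall>x y z::'a. \<forall>\<alpha> \<beta>. geodesic \<alpha> x y \<longrightarrow> geodesic \<beta> x z \<longrightarrow>
        (\<forall>t. 0 \<le> t \<and> t \<le> gromov_product x y z \<longrightarrow> dist (\<alpha> t) (\<beta> t) \<le> \<delta>))"

definition isometric_action :: "('g, 'b) monoid_scheme \<Rightarrow> ('g \<Rightarrow> 'a::metric_space \<Rightarrow> 'a) \<Rightarrow> bool" where
  "isometric_action G act \<longleftrightarrow> group G \<and>
     (\<forall>x. act \<one>\<^bsub>G\<^esub> x = x) \<and>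
     (\<forall>g\<in>carrier G. \<forall>h\<in>carrier G. \<forall>x. act (g \<otimes>\<^bsub>G\<^esub> h) x = act g (act h x)) \<and>
     (\<forall>g\<in>carrier G. \<forall>x y. dist (act g x) (act g y) = dist x y)"

definition fairly_rotating_family ::
  "('g, 'b) monoid_scheme \<Rightarrow> ('g \<Rightarrow> 'a::metric_space \<Rightarrow> 'a) \<Rightarrow> 'a set \<Rightarrow> ('a \<Rightarrow> 'g set) \<Rightarrow> real \<Rightarrow> bool" where
  "fairly_rotating_family G act C Gc \<rho> \<longleftrightarrow>
     (\<forall>g\<in>carrier G. \<forall>c\<in>C. act g c \<in> C) \<and>
     (\<forall>c\<in>C. subgroup (Gc c) G) \<and>
     (\<forall>c\<in>C. \<forall>g\<in>Gc c. act g c = c) \<and>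
     (\<forall>g\<in>carrier G. \<forall>c\<in>C. Gc (act g c) = (\<lambda>h. g \<otimes>\<^bsub>G\<^esub> h \<otimes>\<^bsub>G\<^esub> inv\<^bsub>G\<^esub> g) ` Gc c) \<and>
     (\<forall>c\<in>C. \<forall>c'\<in>C. c \<noteq> c' \<longrightarrow> dist c c' \<ge> \<rho>) \<and>
     (\<forall>c\<in>C. \<forall>g\<in>Gc c. g \<noteq> \<one>\<^bsub>G\<^esub> \<longrightarrow> (\<forall>x\<in>C - {c}.
        \<exists>\<gamma>. geodesic \<gamma> x (act g x) \<and> (\<exists>t\<in>{0..dist x (act g x)}. dist (\<gamma> t) c \<le> 1)))"

definition curve_length :: "(real \<Rightarrow> 'a::metric_space) \<Rightarrow> ereal" where
  "curve_length \<gamma> = (SUP nt \<in> {(n::nat, t::nat \<Rightarrow> real). t 0 = 0 \<and> t n = 1 \<and> (\<forall>i<n. t i \<le> t (Suc i))}.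
      ereal (\<Sum>i<fst nt. dist (\<gamma> (snd nt i)) (\<gamma> (snd nt (Suc i)))))"

definition sphere_set :: "'a::metric_space \<Rightarrow> real \<Rightarrow> 'a set" where
  "sphere_set p R = {x. dist x p = R}"

text \<open>Induced path metric on S_p: infimum of lengths of paths in X \ B_R(p); \<infinity> if none.\<close>
definition sphere_dist :: "real \<Rightarrow> 'a::metric_space \<Rightarrow> 'a \<Rightarrow> 'a \<Rightarrow> ereal" where
  "sphere_dist R p x y = (INF \<gamma> \<in> {\<gamma>. continuous_on {0..1} \<gamma> \<and> \<gamma> 0 = x \<and> \<gamma> 1 = y \<and>
       \<gamma> ` {0..1} \<subseteq> - ball p R}. curve_length \<gamma>)"

definition proj :: "real \<Rightarrow> 'a::metric_space \<Rightarrow> 'a \<Rightarrow> 'a set" where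
  "proj R p x = {y \<in> sphere_set p R. \<exists>\<gamma>. geodesic \<gamma> p x \<and> y \<in> \<gamma> ` {0..dist p x}}"

definition proj_dist :: "real \<Rightarrow> 'a::metric_space \<Rightarrow> 'a \<Rightarrow> 'a \<Rightarrow> ereal" where
  "proj_dist R p x y = (let A = proj R p x \<union> proj R p y in
       (SUP u \<in> A. SUP v \<in> A. sphere_dist R p u v))"

end

theory Submission
  imports Defs
begin


lemma geo_dist:
  assumes "geodesic \<gamma> x y" "s \<in> {0..dist x y}" "t \<in> {0..dist x y}"
  shows "dist (\<gamma> s) (\<gamma> t) = \<bar>s - t\<bar>"
  using assms unfolding geodesic_def by blast

lemma geo_start: "geodesic \<gamma> x y \<Longrightarrow> \<gamma> 0 = x" unfolding geodesic_def by blast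
lemma geo_end: "geodesic \<gamma> x y \<Longrightarrow> \<gamma> (dist x y) = y" unfolding geodesic_def by blast

lemma geo_dist_start:
  assumes "geodesic \<gamma> x y" "0 \<le> s" "s \<le> dist x y"
  shows "dist (\<gamma> s) x = s"
proof -
  have "dist (\<gamma> s) (\<gamma> 0) = \<bar>s - 0\<bar>" using geo_dist[OF assms(1)] assms by simp
  thus ?thesis using geo_start[OF assms(1)] assms by simp
qed

lemma geo_dist_end:
  assumes "geodesic \<gamma> x y" "0 \<le> s" "s \<le> dist x y"
  shows "dist (\<gamma> s) y = dist x y - s"
proof -
  have "dist (\<gamma> s) (\<gamma> (dist x y)) = \<bar>s - dist x y\<bar>" using geo_dist[OF assms(1)] assms by simp
  thus ?thesis using geo_end[OF assms(1)] assms by simp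
qed

lemma geo_rev:
  assumes "geodesic \<gamma> x y"
  shows "geodesic (\<lambda>t. \<gamma> (dist x y - t)) y x"
proof -
  let ?d = "dist x y"
  have "\<gamma> (?d - 0) = y" using geo_end[OF assms] by simp
  moreover have "\<gamma> (?d - dist y x) = x" using geo_start[OF assms] by (simp add: dist_commute)
  moreover have "dist (\<gamma> (?d - s)) (\<gamma> (?d - t)) = \<bar>s - t\<bar>" if "s \<in> {0..dist y x}" "t \<in> {0..dist y x}" for s t
  proof -
    have "dist (\<gamma> (?d - s)) (\<gamma> (?d - t)) = \<bar>(?d - s) - (?d - t)\<bar>"
      using geo_dist[OF assms, of "?d - s" "?d - t"] that by (auto simp: dist_commute)
    thus ?thesis by simp
  qed
  ultimately show ?thesis unfolding geodesic_def by auto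
qed

lemma geo_sub:
  assumes "geodesic \<gamma> x y" "0 \<le> r" "r \<le> r'" "r' \<le> dist x y"
  shows "geodesic (\<lambda>t. \<gamma> (r + t)) (\<gamma> r) (\<gamma> r')"
proof -
  have d: "dist (\<gamma> r) (\<gamma> r') = r' - r" using geo_dist[OF assms(1), of r r'] assms by simp
  have "dist (\<gamma> (r + s)) (\<gamma> (r + t)) = \<bar>s - t\<bar>" if "s \<in> {0..r' - r}" "t \<in> {0..r' - r}" for s t
  proof -
    have "dist (\<gamma> (r + s)) (\<gamma> (r + t)) = \<bar>(r + s) - (r + t)\<bar>"
      using geo_dist[OF assms(1), of "r + s" "r + t"] that assms by auto
    thus ?thesis by simp
  qed
  thus ?thesis unfolding geodesic_def d by auto
qed

lemma geo_iso:
  assumes "geodesic \<gamma> x y" "\<And>u v. dist (f u) (f v) = dist u v"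
  shows "geodesic (\<lambda>t. f (\<gamma> t)) (f x) (f y)"
  using assms unfolding geodesic_def by auto

lemma gp_le: "gromov_product x y z \<le> dist x y"
  unfolding gromov_product_def using dist_triangle[of x z y] by (simp add: dist_commute)

lemma slim:
  assumes hyp: "delta_hyperbolic TYPE('a::metric_space) \<delta>"
    and g: "geodesic \<alpha> x z" and g1: "geodesic \<alpha>1 x (y::'a)" and g2: "geodesic \<alpha>2 y z"
    and t: "0 \<le> t" "t \<le> dist x z"
  shows "(\<exists>t1\<in>{0..dist x y}. dist (\<alpha> t) (\<alpha>1 t1) \<le> \<delta>) \<or> (\<exists>t2\<in>{0..dist y z}. dist (\<alpha> t) (\<alpha>2 t2) \<le> \<delta>)"
proof (cases "t \<le> gromov_product x y z")
  case True
  have "dist (\<alpha>1 t) (\<alpha> t) \<le> \<delta>" using hyp g1 g True t unfolding delta_hyperbolic_def by blast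
  moreover have "t \<le> dist x y" using True gp_le[of x y z] by linarith
  ultimately show ?thesis using t by (auto simp: dist_commute)
next
  case False
  define t' where "t' = dist x z - t"
  have rg: "geodesic (\<lambda>s. \<alpha> (dist x z - s)) z x" using geo_rev[OF g] .
  have rg2: "geodesic (\<lambda>s. \<alpha>2 (dist y z - s)) z y" using geo_rev[OF g2] .
  have eq: "gromov_product z y x = dist x z - gromov_product x y z"
    unfolding gromov_product_def by (simp add: dist_commute field_simps)
  have t'le: "t' \<le> gromov_product z y x" using False eq t'_def by linarith
  have h: "\<forall>x y z::'a. \<forall>\<alpha> \<beta>. geodesic \<alpha> x y \<longrightarrow> geodesic \<beta> x z \<longrightarrow>
        (\<forall>t. 0 \<le> t \<and> t \<le> gromov_product x y z \<longrightarrow> dist (\<alpha> t) (\<beta> t) \<le> \<delta>)"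
    using hyp unfolding delta_hyperbolic_def by blast
  have "0 \<le> t'" using t'_def t by simp
  hence "dist ((\<lambda>s. \<alpha>2 (dist y z - s)) t') ((\<lambda>s. \<alpha> (dist x z - s)) t') \<le> \<delta>"
    using h[rule_format, OF rg2 rg] t'le by blast
  hence "dist (\<alpha>2 (dist y z - t')) (\<alpha> (dist x z - t')) \<le> \<delta>" by simp
  moreover have "dist x z - t' = t" using t'_def by simp
  moreover have "t' \<le> dist z y" using t'le gp_le[of z y x] by linarith
  moreover have "0 \<le> t'" using t'_def t by simp
  ultimately show ?thesis by (auto simp: dist_commute intro!: bexI[of _ "dist y z - t'"])
qed


lemma chain_dist_le:
  "lo \<le> hi \<Longrightarrow> dist (f lo) (f hi) \<le> (\<Sum>i=lo..<hi. dist (f i) (f (Suc i)))"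
proof (induction hi rule: dec_induct)
  case base
  then show ?case by simp
next
  case (step n)
  have "dist (f lo) (f (Suc n)) \<le> dist (f lo) (f n) + dist (f n) (f (Suc n))"
    by (rule dist_triangle)
  then show ?case using step by (simp add: sum.atLeastLessThan_Suc)
qed

lemma arith_aux:
  fixes \<Sigma> S \<epsilon> :: real
  assumes "\<Sigma> \<le> S" "0 \<le> \<epsilon>"
  shows "(\<Sigma>/2 + \<epsilon>) / 2^(N+1) \<le> S / 2^(Suc N + 1) + \<epsilon>"
proof -
  have "(\<Sigma>/2 + \<epsilon>) / 2^(N+1) = \<Sigma> / 2^(Suc N + 1) + \<epsilon> / 2^(N+1)"
    by (simp add: field_simps)
  moreover have "\<Sigma> / 2^(Suc N + 1) \<le> S / 2^(Suc N + 1)"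
    using assms by (simp add: divide_right_mono)
  moreover have "\<epsilon> / 2^(N+1) \<le> \<epsilon>"
  proof -
    have "(1::real) \<le> 2^(N+1)" by (rule one_le_power) simp
    thus ?thesis using assms by (simp add: divide_le_eq mult_le_cancel_left1)
  qed
  ultimately show ?thesis by linarith
qed

lemma chain_main:
  assumes hyp: "delta_hyperbolic TYPE('a::metric_space) \<delta>" and eps: "0 \<le> \<epsilon>"
  shows "\<And>lo hi (f::nat \<Rightarrow> 'a) \<alpha> t S. lo \<le> hi \<Longrightarrow> (\<forall>i\<in>{lo..<hi}. dist (f i) (f (Suc i)) \<le> \<epsilon>)
    \<Longrightarrow> (\<Sum>i=lo..<hi. dist (f i) (f (Suc i))) \<le> S \<Longrightarrow> geodesic \<alpha> (f lo) (f hi)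
    \<Longrightarrow> 0 \<le> t \<Longrightarrow> t \<le> dist (f lo) (f hi)
    \<Longrightarrow> \<exists>i\<in>{lo..hi}. dist (\<alpha> t) (f i) \<le> real N * \<delta> + S / 2^(N+1) + real N * \<epsilon>"
proof (induction N)
  case (0 lo hi f \<alpha> t S)
  let ?d = "dist (f lo) (f hi)"
  have dS: "?d \<le> S" using chain_dist_le[OF 0(1), of f] 0(3) by linarith
  have d1: "dist (\<alpha> t) (f lo) = t" using geo_dist_start[OF 0(4) 0(5) 0(6)] .
  have d2: "dist (\<alpha> t) (f hi) = ?d - t" using geo_dist_end[OF 0(4) 0(5) 0(6)] .
  show ?case
  proof (cases "t \<le> ?d / 2")
    case True
    then show ?thesis using d1 dS 0(1) by (intro bexI[of _ lo]) auto
  next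
    case False
    then show ?thesis using d2 dS 0(1) by (intro bexI[of _ hi]) auto
  qed
next
  case (Suc N lo hi f \<alpha> t S)
  define step where "step i = dist (f i) (f (Suc i))" for i
  define \<Sigma> where "\<Sigma> = (\<Sum>i=lo..<hi. step i)"
  define P where "P k = (\<Sum>i=lo..<k. step i)" for k
  define M where "M = {k\<in>{lo..hi}. P k \<le> \<Sigma>/2}"
  have \<Sigma>0: "0 \<le> \<Sigma>" unfolding \<Sigma>_def step_def by (simp add: sum_nonneg)
  have \<Sigma>S: "\<Sigma> \<le> S" using Suc.prems(3) unfolding \<Sigma>_def step_def .
  have loM: "lo \<in> M" unfolding M_def P_def using Suc.prems(1) \<Sigma>0 by simp
  have finM: "finite M" unfolding M_def by simp
  define m where "m = Max M"
  have mM: "m \<in> M" unfolding m_def using finM loM Max_in by blast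
  hence m: "lo \<le> m" "m \<le> hi" "P m \<le> \<Sigma>/2" unfolding M_def by auto
  have split: "P m + (\<Sum>i=m..<hi. step i) = \<Sigma>"
    unfolding P_def \<Sigma>_def using sum.atLeastLessThan_concat[OF m(1) m(2)] by simp
  have suf: "(\<Sum>i=m..<hi. step i) \<le> \<Sigma>/2 + \<epsilon>"
  proof (cases "m = hi")
    case True
    then show ?thesis using \<Sigma>0 eps by simp
  next
    case False
    hence mh: "m < hi" using m by simp
    have "Suc m \<notin> M"
    proof
      assume "Suc m \<in> M"
      hence "Suc m \<le> m" unfolding m_def using finM Max_ge by blast
      thus False by simp
    qed
    hence "P (Suc m) > \<Sigma>/2" unfolding M_def using m mh by auto
    moreover have "P (Suc m) = P m + step m" unfolding P_def using m(1) by (simp add: sum.atLeastLessThan_Suc)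
    moreover have "step m \<le> \<epsilon>" using Suc.prems(2) m mh unfolding step_def by auto
    ultimately show ?thesis using split by linarith
  qed
  obtain \<alpha>1 where a1: "geodesic \<alpha>1 (f lo) (f m)"
    using hyp unfolding delta_hyperbolic_def geodesic_space_def by blast
  obtain \<alpha>2 where a2: "geodesic \<alpha>2 (f m) (f hi)"
    using hyp unfolding delta_hyperbolic_def geodesic_space_def by blast
  have bound: "\<delta> + (real N * \<delta> + (\<Sigma>/2 + \<epsilon>) / 2^(N+1) + real N * \<epsilon>)
      \<le> real (Suc N) * \<delta> + S / 2^(Suc N + 1) + real (Suc N) * \<epsilon>"
    using arith_aux[OF \<Sigma>S eps, of N] by (simp add: algebra_simps)
  from slim[OF hyp Suc.prems(4) a1 a2 Suc.prems(5) Suc.prems(6)]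
  show ?case
  proof
    assume "\<exists>t1\<in>{0..dist (f lo) (f m)}. dist (\<alpha> t) (\<alpha>1 t1) \<le> \<delta>"
    then obtain t1 where t1: "0 \<le> t1" "t1 \<le> dist (f lo) (f m)" "dist (\<alpha> t) (\<alpha>1 t1) \<le> \<delta>" by auto
    have "\<exists>i\<in>{lo..m}. dist (\<alpha>1 t1) (f i) \<le> real N * \<delta> + (\<Sigma>/2 + \<epsilon>) / 2^(N+1) + real N * \<epsilon>"
      apply (rule Suc.IH[OF m(1) _ _ a1 t1(1) t1(2)])
      using Suc.prems(2) m apply auto[1]
      using m(3) eps unfolding P_def step_def by simp
    then obtain i where i: "i \<in> {lo..m}" "dist (\<alpha>1 t1) (f i) \<le> real N * \<delta> + (\<Sigma>/2 + \<epsilon>) / 2^(N+1) + real N * \<epsilon>" by blast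
    have "dist (\<alpha> t) (f i) \<le> dist (\<alpha> t) (\<alpha>1 t1) + dist (\<alpha>1 t1) (f i)" by (rule dist_triangle)
    thus ?thesis using i t1 bound m by (intro bexI[of _ i]) auto
  next
    assume "\<exists>t2\<in>{0..dist (f m) (f hi)}. dist (\<alpha> t) (\<alpha>2 t2) \<le> \<delta>"
    then obtain t2 where t2: "0 \<le> t2" "t2 \<le> dist (f m) (f hi)" "dist (\<alpha> t) (\<alpha>2 t2) \<le> \<delta>" by auto
    have "\<exists>i\<in>{m..hi}. dist (\<alpha>2 t2) (f i) \<le> real N * \<delta> + (\<Sigma>/2 + \<epsilon>) / 2^(N+1) + real N * \<epsilon>"
      apply (rule Suc.IH[OF m(2) _ _ a2 t2(1) t2(2)])
      using Suc.prems(2) m apply auto[1]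
      using suf unfolding step_def by simp
    then obtain i where i: "i \<in> {m..hi}" "dist (\<alpha>2 t2) (f i) \<le> real N * \<delta> + (\<Sigma>/2 + \<epsilon>) / 2^(N+1) + real N * \<epsilon>" by blast
    have "dist (\<alpha> t) (f i) \<le> dist (\<alpha> t) (\<alpha>2 t2) + dist (\<alpha>2 t2) (f i)" by (rule dist_triangle)
    thus ?thesis using i t2 bound m by (intro bexI[of _ i]) auto
  qed
qed



definition chain_ok :: "'a::metric_space set \<Rightarrow> real \<Rightarrow> 'a \<Rightarrow> 'a \<Rightarrow> real \<Rightarrow> bool" where
 "chain_ok K \<epsilon> x y S \<longleftrightarrow> (\<exists>f n. f 0 = x \<and> f n = y \<and> (\<forall>i\<le>n. f i \<in> K) \<and>
    (\<forall>i<n. dist (f i) (f (Suc i)) \<le> \<epsilon>) \<and> (\<Sum>i<n. dist (f i) (f (Suc i))) \<le> S)"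

lemma chain_mono: "chain_ok K \<epsilon> x y S \<Longrightarrow> S \<le> S' \<Longrightarrow> chain_ok K \<epsilon> x y S'"
  unfolding chain_ok_def by (metis order_trans)

lemma chain_trans:
  assumes "chain_ok K \<epsilon> x y S1" "chain_ok K \<epsilon> y z S2"
  shows "chain_ok K \<epsilon> x z (S1 + S2)"
proof -
  obtain f n1 where f: "f 0 = x" "f n1 = y" "\<forall>i\<le>n1. f i \<in> K"
    "\<forall>i<n1. dist (f i) (f (Suc i)) \<le> \<epsilon>" "(\<Sum>i<n1. dist (f i) (f (Suc i))) \<le> S1"
    using assms(1) unfolding chain_ok_def by blast
  obtain h n2 where h: "h 0 = y" "h n2 = z" "\<forall>i\<le>n2. h i \<in> K"
    "\<forall>i<n2. dist (h i) (h (Suc i)) \<le> \<epsilon>" "(\<Sum>i<n2. dist (h i) (h (Suc i))) \<le> S2"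
    using assms(2) unfolding chain_ok_def by blast
  define F where "F i = (if i \<le> n1 then f i else h (i - n1))" for i
  have FK: "F i = h (i - n1)" if "i \<ge> n1" for i
    using that f(2) h(1) unfolding F_def by auto
  have st: "dist (F i) (F (Suc i)) = (if i < n1 then dist (f i) (f (Suc i))
      else dist (h (i - n1)) (h (Suc (i - n1))))" for i
  proof (cases "i < n1")
    case True
    then show ?thesis unfolding F_def by auto
  next
    case False
    then show ?thesis using FK[of i] FK[of "Suc i"] by (simp add: Suc_diff_le)
  qed
  have "(\<Sum>i<n1+n2. dist (F i) (F (Suc i))) = (\<Sum>i<n1. dist (F i) (F (Suc i))) + (\<Sum>i=n1..<n1+n2. dist (F i) (F (Suc i)))"
    using sum.atLeastLessThan_concat[of 0 n1 "n1+n2" "\<lambda>i. dist (F i) (F (Suc i))"] by (simp add: atLeast0LessThan)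
  also have "(\<Sum>i<n1. dist (F i) (F (Suc i))) = (\<Sum>i<n1. dist (f i) (f (Suc i)))"
    using st by simp
  also have "(\<Sum>i=n1..<n1+n2. dist (F i) (F (Suc i))) = (\<Sum>i=0..<n2. dist (F (i + n1)) (F (Suc (i + n1))))"
    using sum.shift_bounds_nat_ivl[of "\<lambda>i. dist (F i) (F (Suc i))" 0 n1 n2] by (simp add: add.commute)
  also have "\<dots> = (\<Sum>i<n2. dist (h i) (h (Suc i)))"
    using st by (simp add: atLeast0LessThan)
  finally have sum: "(\<Sum>i<n1+n2. dist (F i) (F (Suc i))) \<le> S1 + S2" using f(5) h(5) by linarith
  show ?thesis unfolding chain_ok_def
  proof (intro exI[of _ F] exI[of _ "n1+n2"] conjI)
    show "F 0 = x" unfolding F_def using f by simp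
    show "F (n1 + n2) = z" using FK[of "n1+n2"] h by simp
    show "\<forall>i\<le>n1 + n2. F i \<in> K"
    proof (intro allI impI)
      fix i assume "i \<le> n1 + n2"
      then show "F i \<in> K" using f(3) h(3) FK[of i] unfolding F_def by (cases "i \<le> n1") auto
    qed
    show "\<forall>i<n1 + n2. dist (F i) (F (Suc i)) \<le> \<epsilon>"
      using st f(4) h(4) by auto
    show "(\<Sum>i<n1+n2. dist (F i) (F (Suc i))) \<le> S1 + S2" by (rule sum)
  qed
qed



lemma chain_geo:
  assumes g: "geodesic \<alpha> x y" and K: "\<alpha> ` {0..dist x y} \<subseteq> K" and e: "0 < \<epsilon>"
  shows "chain_ok K \<epsilon> x y (dist x y)"
proof -
  let ?d = "dist x y"
  obtain n::nat where n: "?d / \<epsilon> < real n" using reals_Archimedean2 by blast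
  have npos: "0 < real n" using n e by (smt (verit) divide_nonneg_pos zero_le_dist)
  have dn: "?d / real n \<le> \<epsilon>" using n npos e by (simp add: divide_le_eq field_simps)
  define f where "f i = \<alpha> (real i * ?d / real n)" for i
  have inr: "real i * ?d / real n \<in> {0..?d}" if "i \<le> n" for i
  proof -
    have "real i * ?d \<le> real n * ?d" using that by (simp add: mult_right_mono)
    thus ?thesis using npos by (auto simp: divide_le_eq mult.commute)
  qed
  have stp: "dist (f i) (f (Suc i)) = ?d / real n" if "i < n" for i
  proof -
    have "dist (f i) (f (Suc i)) = \<bar>real i * ?d / real n - real (Suc i) * ?d / real n\<bar>"
      unfolding f_def using geo_dist[OF g inr[of i] inr[of "Suc i"]] that by simp
    also have "real i * ?d / real n - real (Suc i) * ?d / real n = - (?d / real n)"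
      by (simp add: field_simps add_divide_distrib)
    hence "\<bar>real i * ?d / real n - real (Suc i) * ?d / real n\<bar> = ?d / real n" using npos by simp
    finally show ?thesis .
  qed
  show ?thesis unfolding chain_ok_def
  proof (intro exI[of _ f] exI[of _ n] conjI)
    show "f 0 = x" unfolding f_def using geo_start[OF g] by simp
    show "f n = y" unfolding f_def using geo_end[OF g] npos by simp
    show "\<forall>i\<le>n. f i \<in> K" using inr K unfolding f_def by blast
    show "\<forall>i<n. dist (f i) (f (Suc i)) \<le> \<epsilon>" using stp dn by simp
    have "(\<Sum>i<n. dist (f i) (f (Suc i))) = (\<Sum>i<n. ?d / real n)" using stp by simp
    also have "\<dots> = ?d" using npos by simp
    finally show "(\<Sum>i<n. dist (f i) (f (Suc i))) \<le> ?d" by simp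
  qed
qed

lemma chain_curve:
  assumes c: "continuous_on {0..1} c" and K: "c ` {0..1} \<subseteq> K" and L: "curve_length c = ereal L" and e: "0 < \<epsilon>"
  shows "chain_ok K \<epsilon> (c 0) (c 1) L"
proof -
  have "uniformly_continuous_on {0..1} c" using compact_uniformly_continuous[OF c] by simp
  then obtain r where r: "r > 0" "\<forall>x\<in>{0..1}. \<forall>x'\<in>{0..1}. dist x' x < r \<longrightarrow> dist (c x') (c x) < \<epsilon>"
    unfolding uniformly_continuous_on_def using e by blast
  obtain n::nat where n: "1 / r < real n" using reals_Archimedean2 by blast
  have npos: "0 < real n" using n r by (smt (verit) divide_pos_pos)
  have nr: "1 / real n < r" using n r npos by (simp add: divide_less_eq field_simps)
  define t where "t i = real i / real n" for i
  define f where "f i = c (t i)" for i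
  have inr: "t i \<in> {0..1}" if "i \<le> n" for i using that npos unfolding t_def by auto
  have part: "(n, t) \<in> {(n::nat, t::nat \<Rightarrow> real). t 0 = 0 \<and> t n = 1 \<and> (\<forall>i<n. t i \<le> t (Suc i))}"
    unfolding t_def using npos by (auto simp: divide_right_mono)
  have "ereal (\<Sum>i<n. dist (c (t i)) (c (t (Suc i)))) \<le> curve_length c"
    unfolding curve_length_def
    by (rule SUP_upper2[OF part]) simp
  hence sumle: "(\<Sum>i<n. dist (f i) (f (Suc i))) \<le> L" using L unfolding f_def by simp
  show ?thesis unfolding chain_ok_def
  proof (intro exI[of _ f] exI[of _ n] conjI)
    show "f 0 = c 0" unfolding f_def t_def by simp
    show "f n = c 1" unfolding f_def t_def using npos by simp
    show "\<forall>i\<le>n. f i \<in> K" using inr K unfolding f_def by blast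
    show "\<forall>i<n. dist (f i) (f (Suc i)) \<le> \<epsilon>"
    proof (intro allI impI)
      fix i assume i: "i < n"
      have "dist (t (Suc i)) (t i) = 1 / real n" unfolding t_def dist_real_def using npos by (simp add: field_simps)
      hence "dist (c (t (Suc i))) (c (t i)) < \<epsilon>" using r(2) inr[of i] inr[of "Suc i"] i nr by auto
      thus "dist (f i) (f (Suc i)) \<le> \<epsilon>" unfolding f_def by (simp add: dist_commute)
    qed
    show "(\<Sum>i<n. dist (f i) (f (Suc i))) \<le> L" by (rule sumle)
  qed
qed



lemma curve_length_nonneg: "curve_length c \<ge> 0"
proof -
  define t where "t i = (if i = 0 then 0 else 1::real)" for i :: nat
  have part: "(1::nat, t) \<in> {(n::nat, t::nat \<Rightarrow> real). t 0 = 0 \<and> t n = 1 \<and> (\<forall>i<n. t i \<le> t (Suc i))}"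
    unfolding t_def by auto
  have "ereal (\<Sum>i<1. dist (c (t i)) (c (t (Suc i)))) \<le> curve_length c"
    unfolding curve_length_def by (rule SUP_upper2[OF part]) simp
  moreover have "0 \<le> (\<Sum>i<1::nat. dist (c (t i)) (c (t (Suc i))))" by simp
  ultimately show ?thesis by (meson ereal_less_eq(5) order_trans)
qed

lemma key_bound:
  fixes a x y p :: "'a::metric_space"
  assumes hyp: "delta_hyperbolic TYPE('a) \<delta>" and dpos: "\<delta> > 0"
    and g: "geodesic \<alpha> x y" and tp: "0 \<le> tp" "tp \<le> dist x y" and pa: "dist (\<alpha> tp) a \<le> 1"
    and ch: "\<And>\<epsilon>. \<epsilon> > 0 \<Longrightarrow> chain_ok (- ball a R) \<epsilon> x y S"
    and R: "2 + 2 * \<delta> \<le> R"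
  shows "2 powr ((R - 2) / \<delta>) \<le> S"
proof -
  have step1: "R - 1 \<le> real N * \<delta> + S / 2^(N+1) + real N * \<epsilon>" if e: "\<epsilon> > 0" for N \<epsilon>
  proof -
    obtain f n where f: "f 0 = x" "f n = y" "\<forall>i\<le>n. f i \<in> - ball a R"
      "\<forall>i<n. dist (f i) (f (Suc i)) \<le> \<epsilon>" "(\<Sum>i<n. dist (f i) (f (Suc i))) \<le> S"
      using ch[OF e] unfolding chain_ok_def by blast
    have "\<exists>i\<in>{0..n}. dist (\<alpha> tp) (f i) \<le> real N * \<delta> + S / 2^(N+1) + real N * \<epsilon>"
      apply (rule chain_main[OF hyp _ le0])
      using e f g tp by (auto simp: atLeast0LessThan)
    then obtain i where i: "i \<le> n" "dist (\<alpha> tp) (f i) \<le> real N * \<delta> + S / 2^(N+1) + real N * \<epsilon>" by auto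
    have "R \<le> dist a (f i)" using f(3) i(1) by auto
    also have "\<dots> \<le> dist a (\<alpha> tp) + dist (\<alpha> tp) (f i)" by (rule dist_triangle)
    finally show ?thesis using pa i(2) by (simp add: dist_commute)
  qed
  have step2: "R - 1 \<le> real N * \<delta> + S / 2^(N+1)" for N
  proof (rule field_le_epsilon)
    fix e :: real assume e: "0 < e"
    have "R - 1 \<le> real N * \<delta> + S / 2^(N+1) + real N * (e / (real N + 1))"
      using step1[of "e / (real N + 1)" N] e by simp
    moreover have "real N * (e / (real N + 1)) \<le> e"
      using e by (simp add: field_simps)
    ultimately show "R - 1 \<le> real N * \<delta> + S / 2 ^ (N + 1) + e" by linarith
  qed
  define z where "z = (R - 2) / \<delta>"
  have z2: "2 \<le> z" unfolding z_def using R dpos by (simp add: field_simps)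
  define k where "k = nat \<lceil>z\<rceil>"
  have k1: "z \<le> real k" unfolding k_def using z2 by linarith
  have k2: "real k < z + 1" unfolding k_def using z2 by linarith
  have k0: "k \<ge> 1" using k1 z2 by linarith
  define N where "N = k - 1"
  have NK: "N + 1 = k" using k0 N_def by simp
  have "real N < z" using k2 NK by linarith
  hence "real N * \<delta> < R - 2" unfolding z_def using dpos by (simp add: field_simps)
  moreover have "R - 1 \<le> real N * \<delta> + S / 2^k" using step2[of N] NK by (metis)
  ultimately have "1 < S / 2^k" by linarith
  hence "2^k < S" by (simp add: field_simps)
  moreover have "2 powr z \<le> 2 powr (real k)" using k1 by simp
  moreover have "2 powr (real k) = 2^k" by (simp add: powr_realpow)
  ultimately show ?thesis unfolding z_def by linarith
qed



theorem lemma3p7: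
  fixes G :: "('g, 'b) monoid_scheme" and act :: "'g \<Rightarrow> 'a::metric_space \<Rightarrow> 'a"
    and C :: "'a set" and Gc :: "'a \<Rightarrow> 'g set"
    and \<delta> \<rho> R :: real and a b :: 'a and g :: 'g
  assumes "\<delta> > 0" and "delta_hyperbolic TYPE('a) \<delta>"
    and "isometric_action G act"
    and "fairly_rotating_family G act C Gc \<rho>" and "\<rho> \<ge> 20 * \<delta>"
    and "2 + 2 * \<delta> \<le> R" and "R \<le> \<rho> / 2 - 3 * \<delta>"
    and "a \<in> C" and "b \<in> C" and "a \<noteq> b"
    and "g \<in> Gc a" and "g \<noteq> \<one>\<^bsub>G\<^esub>"
  shows "proj_dist R a b (act g b) \<ge> ereal (2 powr ((R - 2) / \<delta>) - 4 - 6 * \<delta>)"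
proof -
  note dpos = assms(1) and hyp = assms(2) and Rlo = assms(6) and Rhi = assms(7)
  have gsp: "\<And>x y::'a. \<exists>\<gamma>. geodesic \<gamma> x y"
    using hyp unfolding delta_hyperbolic_def geodesic_space_def by blast
  have tri: "\<And>x y z::'a. \<And>\<alpha> \<beta> t. geodesic \<alpha> x y \<Longrightarrow> geodesic \<beta> x z \<Longrightarrow>
        0 \<le> t \<Longrightarrow> t \<le> gromov_product x y z \<Longrightarrow> dist (\<alpha> t) (\<beta> t) \<le> \<delta>"
    using hyp unfolding delta_hyperbolic_def by blast
  have sub: "subgroup (Gc a) G" using assms(4,8) unfolding fairly_rotating_family_def by blast
  have gG: "g \<in> carrier G" using subgroup.subset[OF sub] assms(11) by blast
  have iso: "\<And>x y. dist (act g x) (act g y) = dist x y"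
    using assms(3) gG unfolding isometric_action_def by blast
  have ga: "act g a = a" using assms(4,8,11) unfolding fairly_rotating_family_def by blast
  have sep: "\<rho> \<le> dist a b" using assms(4,8,9,10) unfolding fairly_rotating_family_def by blast
  have "\<exists>\<beta>. geodesic \<beta> b (act g b) \<and> (\<exists>t\<in>{0..dist b (act g b)}. dist (\<beta> t) a \<le> 1)"
    using assms(4,8,9,10,11,12) unfolding fairly_rotating_family_def by blast
  then obtain \<beta> t0 where \<beta>: "geodesic \<beta> b (act g b)" and t0: "0 \<le> t0" "t0 \<le> dist b (act g b)"
    and bt0: "dist (\<beta> t0) a \<le> 1" by auto
  define D where "D = dist a b"
  define E where "E = dist b (act g b)"
  have DgB: "dist a (act g b) = D" unfolding D_def using iso[of a b] ga by simp
  obtain \<gamma> where \<gamma>: "geodesic \<gamma> a b" using gsp by blast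
  define s where "s = R + \<delta>"
  have Rpos: "0 \<le> R" using Rlo dpos by simp
  have sD: "s \<le> D" unfolding s_def D_def using sep Rhi assms(5) dpos by linarith
  have s1: "1 \<le> s" unfolding s_def using Rlo dpos by linarith
  have d1: "dist (\<beta> t0) b = t0" using geo_dist_start[OF \<beta> t0] .
  have d2: "dist (\<beta> t0) (act g b) = E - t0" using geo_dist_end[OF \<beta> t0] unfolding E_def .
  have t0lo: "D - 1 \<le> t0"
    using dist_triangle[of a b "\<beta> t0"] d1 bt0 unfolding D_def by (simp add: dist_commute)
  have t0hi: "D - 1 \<le> E - t0"
    using dist_triangle[of a "act g b" "\<beta> t0"] d2 bt0 DgB by (simp add: dist_commute)
  have E2: "D - s \<le> E / 2" using t0lo t0hi s1 by linarith
  have gr: "geodesic (\<lambda>t. \<gamma> (D - t)) b a" using geo_rev[OF \<gamma>] unfolding D_def .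
  have gp1: "gromov_product b a (act g b) = E / 2"
    unfolding gromov_product_def E_def using DgB unfolding D_def by (simp add: dist_commute)
  have dxu: "dist (\<gamma> (D - (D - s))) (\<beta> (D - s)) \<le> \<delta>"
    using tri[OF gr \<beta>, of "D - s"] sD E2 gp1 by simp
  hence dxu': "dist (\<beta> (D - s)) (\<gamma> s) \<le> \<delta>" by (simp add: dist_commute)
  have ggr: "geodesic (\<lambda>t. act g (\<gamma> (D - t))) (act g b) a"
    using geo_iso[OF gr iso] ga by simp
  have \<beta>r: "geodesic (\<lambda>t. \<beta> (E - t)) (act g b) b" using geo_rev[OF \<beta>] unfolding E_def .
  have gp2: "gromov_product (act g b) a b = E / 2"
    unfolding gromov_product_def E_def using DgB unfolding D_def by (simp add: dist_commute)
  have "dist (act g (\<gamma> (D - (D - s)))) (\<beta> (E - (D - s))) \<le> \<delta>"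
    using tri[OF ggr \<beta>r, of "D - s"] sD E2 gp2 by simp
  hence dyg': "dist (\<beta> (E - (D - s))) (act g (\<gamma> s)) \<le> \<delta>" by (simp add: dist_commute)
  have R_D: "R \<le> D" using sD dpos s_def by simp
  have du: "dist a (\<gamma> t) = t" if "0 \<le> t" "t \<le> D" for t
    using geo_dist_start[OF \<gamma>, of t] that unfolding D_def by (simp add: dist_commute)
  have dgu: "dist a (act g (\<gamma> t)) = t" if "0 \<le> t" "t \<le> D" for t
    using du[OF that] iso[of a "\<gamma> t"] ga by simp
  define u where "u = \<gamma> R"
  have uP: "u \<in> proj R a b"
    unfolding proj_def sphere_set_def u_def using du[OF Rpos R_D] \<gamma> Rpos R_D unfolding D_def
    by (auto simp: dist_commute)
  have ggeo: "geodesic (\<lambda>t. act g (\<gamma> t)) a (act g b)" using geo_iso[OF \<gamma> iso] ga by simp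
  have guP: "act g u \<in> proj R a (act g b)"
    unfolding proj_def sphere_set_def u_def using dgu[OF Rpos R_D] ggeo Rpos R_D DgB
    by (auto simp: dist_commute intro!: exI[of _ "\<lambda>t. act g (\<gamma> t)"])
  have PD: "sphere_dist R a u (act g u) \<le> proj_dist R a b (act g b)"
    unfolding proj_dist_def Let_def
    by (rule SUP_upper2[of u], use uP in blast, rule SUP_upper2[of "act g u"], use guP in auto)
  have ord: "0 \<le> D - s" "D - s \<le> E - (D - s)" "E - (D - s) \<le> E" using sD E2 by auto
  have gxy: "geodesic (\<lambda>t. \<beta> (D - s + t)) (\<beta> (D - s)) (\<beta> (E - (D - s)))"
    using geo_sub[OF \<beta> ord(1) ord(2)] ord(3) unfolding E_def by simp
  have dxy: "dist (\<beta> (D - s)) (\<beta> (E - (D - s))) = E - (D - s) - (D - s)"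
    using geo_dist[OF \<beta>, of "D - s" "E - (D - s)"] ord unfolding E_def by auto
  define tp where "tp = t0 - (D - s)"
  have tp: "0 \<le> tp" "tp \<le> dist (\<beta> (D - s)) (\<beta> (E - (D - s)))"
    unfolding tp_def dxy using t0lo t0hi s1 by auto
  have ptp: "dist ((\<lambda>t. \<beta> (D - s + t)) tp) a \<le> 1" unfolding tp_def using bt0 by simp
  let ?K = "- ball a R"
  have main: "ereal (2 powr ((R - 2) / \<delta>) - 4 - 6 * \<delta>) \<le> curve_length c"
    if c: "continuous_on {0..1} c" "c 0 = u" "c 1 = act g u" "c ` {0..1} \<subseteq> ?K" for c
  proof (cases "curve_length c")
    case (real L)
    have chain: "chain_ok ?K \<epsilon> (\<beta> (D - s)) (\<beta> (E - (D - s))) (L + 4 * \<delta>)" if e: "\<epsilon> > 0" for \<epsilon>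
    proof -
      obtain \<eta>1 where \<eta>1: "geodesic \<eta>1 (\<beta> (D - s)) (\<gamma> s)" using gsp by blast
      have c1: "chain_ok ?K \<epsilon> (\<beta> (D - s)) (\<gamma> s) \<delta>"
      proof (rule chain_mono[OF chain_geo[OF \<eta>1 _ e]])
        show "dist (\<beta> (D - s)) (\<gamma> s) \<le> \<delta>" by (rule dxu')
        show "\<eta>1 ` {0..dist (\<beta> (D - s)) (\<gamma> s)} \<subseteq> ?K"
        proof
          fix z assume "z \<in> \<eta>1 ` {0..dist (\<beta> (D - s)) (\<gamma> s)}"
          then obtain t where t: "0 \<le> t" "t \<le> dist (\<beta> (D - s)) (\<gamma> s)" "z = \<eta>1 t" by auto
          have "dist z (\<gamma> s) \<le> \<delta>" using geo_dist_end[OF \<eta>1 t(1,2)] t dxu' by simp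
          moreover have "dist a (\<gamma> s) = s" using du[of s] sD s1 by simp
          moreover have "dist a (\<gamma> s) \<le> dist a z + dist z (\<gamma> s)" by (rule dist_triangle)
          ultimately show "z \<in> ?K" unfolding s_def by auto
        qed
      qed
      have g2: "geodesic (\<lambda>t. \<gamma> (R + t)) (\<gamma> R) (\<gamma> s)"
        using geo_sub[OF \<gamma> Rpos, of s] sD s_def dpos unfolding D_def by simp
      have dRs: "dist (\<gamma> R) (\<gamma> s) = \<delta>"
        using geo_dist[OF \<gamma>, of R s] Rpos sD s_def dpos unfolding D_def by auto
      have g2r: "geodesic (\<lambda>t. \<gamma> (R + (\<delta> - t))) (\<gamma> s) (\<gamma> R)"
        using geo_rev[OF g2] unfolding dRs .
      have c2: "chain_ok ?K \<epsilon> (\<gamma> s) (\<gamma> R) \<delta>"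
      proof -
        have "(\<lambda>t. \<gamma> (R + (\<delta> - t))) ` {0..dist (\<gamma> s) (\<gamma> R)} \<subseteq> ?K"
        proof
          fix z assume "z \<in> (\<lambda>t. \<gamma> (R + (\<delta> - t))) ` {0..dist (\<gamma> s) (\<gamma> R)}"
          then obtain t where t: "0 \<le> t" "t \<le> \<delta>" "z = \<gamma> (R + (\<delta> - t))" using dRs by (auto simp: dist_commute)
          have "dist a z = R + (\<delta> - t)" using du[of "R + (\<delta> - t)"] t Rpos sD s_def by simp
          thus "z \<in> ?K" using t by auto
        qed
        from chain_geo[OF g2r this e] show ?thesis using dRs by (simp add: dist_commute)
      qed
      have c3: "chain_ok ?K \<epsilon> (\<gamma> R) (act g (\<gamma> R)) L"
        using chain_curve[OF c(1) c(4) real e] c(2,3) unfolding u_def by simp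
      have g4: "geodesic (\<lambda>t. act g (\<gamma> (R + t))) (act g (\<gamma> R)) (act g (\<gamma> s))"
        using geo_iso[OF g2 iso] .
      have dg4: "dist (act g (\<gamma> R)) (act g (\<gamma> s)) = \<delta>" using iso dRs by simp
      have c4: "chain_ok ?K \<epsilon> (act g (\<gamma> R)) (act g (\<gamma> s)) \<delta>"
      proof -
        have "(\<lambda>t. act g (\<gamma> (R + t))) ` {0..dist (act g (\<gamma> R)) (act g (\<gamma> s))} \<subseteq> ?K"
        proof
          fix z assume "z \<in> (\<lambda>t. act g (\<gamma> (R + t))) ` {0..dist (act g (\<gamma> R)) (act g (\<gamma> s))}"
          then obtain t where t: "0 \<le> t" "t \<le> \<delta>" "z = act g (\<gamma> (R + t))" using dg4 by auto
          have "dist a z = R + t" using dgu[of "R + t"] t Rpos sD s_def by simp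
          thus "z \<in> ?K" using t by auto
        qed
        from chain_geo[OF g4 this e] show ?thesis using dg4 by simp
      qed
      obtain \<eta>5 where \<eta>5: "geodesic \<eta>5 (act g (\<gamma> s)) (\<beta> (E - (D - s)))" using gsp by blast
      have c5: "chain_ok ?K \<epsilon> (act g (\<gamma> s)) (\<beta> (E - (D - s))) \<delta>"
      proof (rule chain_mono[OF chain_geo[OF \<eta>5 _ e]])
        show "dist (act g (\<gamma> s)) (\<beta> (E - (D - s))) \<le> \<delta>" using dyg' by (simp add: dist_commute)
        show "\<eta>5 ` {0..dist (act g (\<gamma> s)) (\<beta> (E - (D - s)))} \<subseteq> ?K"
        proof
          fix z assume "z \<in> \<eta>5 ` {0..dist (act g (\<gamma> s)) (\<beta> (E - (D - s)))}"
          then obtain t where t: "0 \<le> t" "t \<le> dist (act g (\<gamma> s)) (\<beta> (E - (D - s)))" "z = \<eta>5 t" by auto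
          have "dist (act g (\<gamma> s)) z = t" using geo_dist_start[OF \<eta>5 t(1,2)] t by (simp add: dist_commute)
          hence "dist z (act g (\<gamma> s)) \<le> \<delta>" using t dyg' by (simp add: dist_commute)
          moreover have "dist a (act g (\<gamma> s)) = s" using dgu[of s] sD s1 by simp
          moreover have "dist a (act g (\<gamma> s)) \<le> dist a z + dist z (act g (\<gamma> s))" by (rule dist_triangle)
          ultimately show "z \<in> ?K" unfolding s_def by auto
        qed
      qed
      have "chain_ok ?K \<epsilon> (\<beta> (D - s)) (\<beta> (E - (D - s))) (\<delta> + (\<delta> + (L + (\<delta> + \<delta>))))"
        by (rule chain_trans[OF c1 chain_trans[OF c2 chain_trans[OF c3 chain_trans[OF c4 c5]]]])
      thus ?thesis by (rule chain_mono) simp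
    qed
    have "2 powr ((R - 2) / \<delta>) \<le> L + 4 * \<delta>"
      by (rule key_bound[OF hyp dpos gxy tp ptp chain Rlo])
    then show ?thesis using real dpos by simp
  next
    case PInf
    then show ?thesis by simp
  next
    case MInf
    then show ?thesis using curve_length_nonneg[of c] by simp
  qed
  have "ereal (2 powr ((R - 2) / \<delta>) - 4 - 6 * \<delta>) \<le> sphere_dist R a u (act g u)"
    unfolding sphere_dist_def by (rule INF_greatest) (use main in auto)
  with PD show ?thesis by simp
qed


end
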